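(* Let $(E,\tau)$ be a locally solid vector lattice, where $\tau$ is a Fatou topology. Suppose that $C_\tau=E$ (which holds in particular when $E$ has the countable sup property, when $C_\tau$ has a countable order basis, or when $\tau$ is metrisable). Then every $\tau$-convergent net in $E$ has an embedded sequence that is uo-convergent to the same limit.
   Context: All vector lattices are real and Archimedean; linear topologies are Hausdorff. A locally solid topology on a vector lattice is a linear topology such that zero has a neighbourhood basis of solid sets. A net $(x_\alpha)$ order converges to $x$ if there is a net $y_\beta\downarrow0$ such that for each $\beta_0$ eventually $|x_\alpha-x|\leq y_{\beta_0}$; it uo-converges to $x$ if $|x_\alpha-x|\wedge|y|$ order converges to $0$ for every $y\in E$. A set is order closed if it contains the order limits of its nets. A Fatou topology is a locally solid topology in which zero has a neighbourhood basis of order closed solid sets. A sequence $(V_n)$ of neighbourhoods of zero is normal if $V_{n+1}+V_{n+1}\subseteq V_n$; the carrier $C_\tau$ is the union of the disjoint complements $N^{\mathrm d}$ where $N=\bigcap_nV_n$ ranges over intersections of normal sequences of solid $\tau$-neighbourhoods of zero. An order basis of a vector lattice $G$ is a non-empty $A\subseteq G$ with $A^{\mathrm d}=\{0\}$. $E$ has the countable sup property if every subset with a supremum contains an at most countable subset with the same supremum. Embedded sequence: given a net $(x_\alpha)_{\alpha\in A}$, a sequence $(x_{\alpha_n})_{n\geq1}$ with $\alpha_1\leq\alpha_2\leq\dotsb$, strictly increasing when $A$ has no largest element. *)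

theory Defs
  imports "HOL-Analysis.Analysis" "HOL-Library.Lattice_Algebras"
begin

definition vabs :: "'a::{ordered_real_vector, lattice_ab_group_add} \<Rightarrow> 'a" where
  "vabs x = sup x (- x)"

definition archimedean_vl :: "'a::{ordered_real_vector, lattice_ab_group_add} itself \<Rightarrow> bool" where
  "archimedean_vl _ \<longleftrightarrow>
     (\<forall>x y :: 'a. 0 \<le> x \<and> (\<forall>n::nat. real n *\<^sub>R x \<le> y) \<longrightarrow> x = 0)"

definition directed_on :: "'i set \<Rightarrow> ('i \<Rightarrow> 'i \<Rightarrow> bool) \<Rightarrow> bool" where
  "directed_on D le \<longleftrightarrow> D \<noteq> {} \<and> (\<forall>a\<in>D. le a a) \<and>
     (\<forall>a\<in>D. \<forall>b\<in>D. \<forall>c\<in>D. le a b \<and> le b c \<longrightarrow> le a c) \<and>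
     (\<forall>a\<in>D. \<forall>b\<in>D. \<exists>c\<in>D. le a c \<and> le b c)"

definition is_infimum :: "'a::order set \<Rightarrow> 'a \<Rightarrow> bool" where
  "is_infimum S m \<longleftrightarrow> (\<forall>s\<in>S. m \<le> s) \<and> (\<forall>z. (\<forall>s\<in>S. z \<le> s) \<longrightarrow> z \<le> m)"

text \<open>The dominating nets are indexed by directed sets whose elements lie in the type of E
  itself; this is no loss of generality (a decreasing net can be reindexed by its range).\<close>
definition net_decr_to_zero :: "'a set \<Rightarrow> ('a \<Rightarrow> 'a \<Rightarrow> bool) \<Rightarrow> ('a \<Rightarrow> 'a::{ordered_real_vector, lattice_ab_group_add}) \<Rightarrow> bool" where
  "net_decr_to_zero B lb y \<longleftrightarrow> directed_on B lb \<and>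
     (\<forall>b\<in>B. \<forall>b'\<in>B. lb b b' \<longrightarrow> y b' \<le> y b) \<and> is_infimum (y ` B) 0"

definition order_conv :: "'i set \<Rightarrow> ('i \<Rightarrow> 'i \<Rightarrow> bool) \<Rightarrow> ('i \<Rightarrow> 'a::{ordered_real_vector, lattice_ab_group_add}) \<Rightarrow> 'a \<Rightarrow> bool" where
  "order_conv D le x l \<longleftrightarrow> (\<exists>B lb y. net_decr_to_zero B lb y \<and>
     (\<forall>b0\<in>B. \<exists>a0\<in>D. \<forall>a\<in>D. le a0 a \<longrightarrow> vabs (x a - l) \<le> y b0))"

definition uo_conv :: "'i set \<Rightarrow> ('i \<Rightarrow> 'i \<Rightarrow> bool) \<Rightarrow> ('i \<Rightarrow> 'a::{ordered_real_vector, lattice_ab_group_add}) \<Rightarrow> 'a \<Rightarrow> bool" where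
  "uo_conv D le x l \<longleftrightarrow> (\<forall>y. order_conv D le (\<lambda>a. inf (vabs (x a - l)) (vabs y)) 0)"

text \<open>Nets are indexed by
  directed sets with elements in the type of E (no loss of generality: any order convergent
  net in A yields one indexed by the dominating set with the same limit).\<close>
definition order_closed :: "'a::{ordered_real_vector, lattice_ab_group_add} set \<Rightarrow> bool" where
  "order_closed A \<longleftrightarrow> (\<forall>(D::'a set) le x l. directed_on D le \<and> (\<forall>a\<in>D. x a \<in> A)
       \<and> order_conv D le x l \<longrightarrow> l \<in> A)"

definition solid :: "'a::{ordered_real_vector, lattice_ab_group_add} set \<Rightarrow> bool" where
  "solid S \<longleftrightarrow> (\<forall>x y. y \<in> S \<and> vabs x \<le> vabs y \<longrightarrow> x \<in> S)"

definition nhd0 :: "'a topology \<Rightarrow> 'a::zero set \<Rightarrow> bool" where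
  "nhd0 T V \<longleftrightarrow> (\<exists>U. openin T U \<and> 0 \<in> U \<and> U \<subseteq> V)"

definition linear_topology :: "'a::real_vector topology \<Rightarrow> bool" where
  "linear_topology T \<longleftrightarrow> topspace T = UNIV \<and> Hausdorff_space T \<and>
     continuous_map (prod_topology T T) T (\<lambda>(x, y). x + y) \<and>
     continuous_map (prod_topology euclideanreal T) T (\<lambda>(c, x). c *\<^sub>R x)"

definition locally_solid :: "'a::{ordered_real_vector, lattice_ab_group_add} topology \<Rightarrow> bool" where
  "locally_solid T \<longleftrightarrow> linear_topology T \<and>
     (\<forall>V. nhd0 T V \<longrightarrow> (\<exists>W. nhd0 T W \<and> solid W \<and> W \<subseteq> V))"

definition fatou_topology :: "'a::{ordered_real_vector, lattice_ab_group_add} topology \<Rightarrow> bool" where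
  "fatou_topology T \<longleftrightarrow> locally_solid T \<and>
     (\<forall>V. nhd0 T V \<longrightarrow> (\<exists>W. nhd0 T W \<and> solid W \<and> order_closed W \<and> W \<subseteq> V))"

definition disj_compl :: "'a::{ordered_real_vector, lattice_ab_group_add} set \<Rightarrow> 'a set" where
  "disj_compl N = {x. \<forall>z\<in>N. inf (vabs x) (vabs z) = 0}"

definition normal_solid_seq :: "'a::{ordered_real_vector, lattice_ab_group_add} topology \<Rightarrow> (nat \<Rightarrow> 'a set) \<Rightarrow> bool" where
  "normal_solid_seq T V \<longleftrightarrow> (\<forall>n. nhd0 T (V n) \<and> solid (V n) \<and>
      {a + b | a b. a \<in> V (Suc n) \<and> b \<in> V (Suc n)} \<subseteq> V n)"

definition carrier_top :: "'a::{ordered_real_vector, lattice_ab_group_add} topology \<Rightarrow> 'a set" where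
  "carrier_top T = (\<Union>V \<in> {V. normal_solid_seq T V}. disj_compl (\<Inter>n. V n))"

definition net_tends :: "'a topology \<Rightarrow> 'i set \<Rightarrow> ('i \<Rightarrow> 'i \<Rightarrow> bool) \<Rightarrow> ('i \<Rightarrow> 'a) \<Rightarrow> 'a \<Rightarrow> bool" where
  "net_tends T D le x l \<longleftrightarrow> (\<forall>U. openin T U \<and> l \<in> U \<longrightarrow>
      (\<exists>a0\<in>D. \<forall>a\<in>D. le a0 a \<longrightarrow> x a \<in> U))"

definition embedded_seq_idx :: "'i set \<Rightarrow> ('i \<Rightarrow> 'i \<Rightarrow> bool) \<Rightarrow> (nat \<Rightarrow> 'i) \<Rightarrow> bool" where
  "embedded_seq_idx D le \<alpha> \<longleftrightarrow> (\<forall>n. \<alpha> n \<in> D \<and> le (\<alpha> n) (\<alpha> (Suc n))) \<and>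
     ((\<not> (\<exists>m\<in>D. \<forall>a\<in>D. le a m)) \<longrightarrow> (\<forall>n. \<not> le (\<alpha> (Suc n)) (\<alpha> n)))"

end

theory Submission
  imports Defs
begin


lemma vabs_nonneg: "0 \<le> vabs (x::'a::{ordered_real_vector, lattice_ab_group_add})"
proof -
  have "x + - x \<le> vabs x + vabs x" unfolding vabs_def by (intro add_mono) auto
  then show ?thesis by simp
qed

lemma vabs_of_nonneg: "0 \<le> (x::'a::{ordered_real_vector, lattice_ab_group_add}) \<Longrightarrow> vabs x = x"
  unfolding vabs_def by (rule sup_absorb1) (meson neg_le_0_iff_le order.trans)

lemma vabs_minus: "vabs (- (x::'a::{ordered_real_vector, lattice_ab_group_add})) = vabs x"
  unfolding vabs_def by (simp add: sup_commute)

lemma vabs_vabs: "vabs (vabs (x::'a::{ordered_real_vector, lattice_ab_group_add})) = vabs x"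
  by (simp add: vabs_nonneg vabs_of_nonneg)

lemma diff_pprt: "w - pprt (w - s) = inf w (s::'a::{ordered_real_vector, lattice_ab_group_add})"
proof -
  have "w - pprt (w - s) = w + inf (s - w) 0" unfolding pprt_def by (simp add: diff_sup_eq_inf)
  also have "\<dots> = inf s w" by (simp add: add_inf_distrib_left)
  finally show ?thesis by (simp add: inf_commute)
qed

lemma pprt_disj: "inf (pprt x) (pprt (- x)) = (0::'a::{ordered_real_vector, lattice_ab_group_add})"
proof -
  have n: "nprt x = x - pprt x" using prts[of x] by (metis add_diff_cancel_left')
  have e: "pprt (- x) = pprt x - x" using pprt_neg[of x] n by simp
  have "inf (pprt x) (pprt x - x) = pprt x + inf 0 (- x)" by (simp add: add_inf_distrib_left)
  also have "\<dots> = pprt x - sup 0 x" by (simp add: neg_sup_eq_inf[symmetric])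
  also have "\<dots> = 0" by (simp add: pprt_def sup_commute)
  finally show ?thesis using e by simp
qed

lemma pprt_diff_inf: "pprt (a - d) = a - inf a (d::'a::{ordered_real_vector, lattice_ab_group_add})"
  unfolding pprt_def by (simp add: diff_inf_eq_sup add_sup_distrib_left sup_commute)

lemma pprt_pprt_diff: "0 \<le> d \<Longrightarrow> pprt (pprt x - d) = pprt (x - (d::'a::{ordered_real_vector, lattice_ab_group_add}))"
proof -
  assume d: "0 \<le> d"
  have "sup (sup x 0 - d) 0 = sup (sup (x - d) (0 - d)) 0"
    using add_sup_distrib_right[of x 0 "- d"] by simp
  also have "\<dots> = sup (x - d) (sup (- d) 0)" by (simp add: sup_assoc)
  also have "sup (- d) 0 = 0" using d by (simp add: sup_absorb2)
  finally show ?thesis unfolding pprt_def by simp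
qed

lemma scaleR_inf: "0 \<le> c \<Longrightarrow> c *\<^sub>R inf a b = inf (c *\<^sub>R a) (c *\<^sub>R (b::'a::{ordered_real_vector, lattice_ab_group_add}))"
proof (cases "c = 0")
  case False
  assume c: "0 \<le> c"
  then have cp: "0 < c" using False by simp
  show ?thesis
  proof (rule order.antisym)
    show "c *\<^sub>R inf a b \<le> inf (c *\<^sub>R a) (c *\<^sub>R b)" using c by (simp add: scaleR_left_mono)
    have "inverse c *\<^sub>R inf (c *\<^sub>R a) (c *\<^sub>R b) \<le> a"
      using scaleR_left_mono[OF inf_le1[of "c *\<^sub>R a" "c *\<^sub>R b"], of "inverse c"] cp by simp
    moreover have "inverse c *\<^sub>R inf (c *\<^sub>R a) (c *\<^sub>R b) \<le> b"
      using scaleR_left_mono[OF inf_le2[of "c *\<^sub>R a" "c *\<^sub>R b"], of "inverse c"] cp by simp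
    ultimately have "inverse c *\<^sub>R inf (c *\<^sub>R a) (c *\<^sub>R b) \<le> inf a b" by simp
    from scaleR_left_mono[OF this, of c] cp show "inf (c *\<^sub>R a) (c *\<^sub>R b) \<le> c *\<^sub>R inf a b" by simp
  qed
qed simp

lemma disj_scale:
  fixes a b :: "'a::{ordered_real_vector, lattice_ab_group_add}"
  assumes "0 \<le> a" "0 \<le> b" "inf a b = 0" "0 \<le> c"
  shows "inf a (c *\<^sub>R b) = 0"
proof (cases "c \<le> 1")
  case True
  have "c *\<^sub>R b \<le> 1 *\<^sub>R b" using assms True by (intro scaleR_right_mono) auto
  then have "inf a (c *\<^sub>R b) \<le> inf a b" by (simp add: le_infI2)
  moreover have "0 \<le> inf a (c *\<^sub>R b)" using assms by (simp add: scaleR_nonneg_nonneg)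
  ultimately show ?thesis using assms by simp
next
  case False
  have "1 *\<^sub>R a \<le> c *\<^sub>R a" using assms False by (intro scaleR_right_mono) auto
  then have "inf a (c *\<^sub>R b) \<le> inf (c *\<^sub>R a) (c *\<^sub>R b)" by (simp add: le_infI1)
  also have "\<dots> = c *\<^sub>R inf a b" by (simp only: scaleR_inf[OF assms(4)])
  finally have "inf a (c *\<^sub>R b) \<le> 0" using assms by simp
  moreover have "0 \<le> inf a (c *\<^sub>R b)" using assms by (simp add: scaleR_nonneg_nonneg)
  ultimately show ?thesis by simp
qed

lemma archA:
  fixes u y :: "'a::{ordered_real_vector, lattice_ab_group_add}"
  assumes arch: "archimedean_vl TYPE('a)" and "0 \<le> y" "0 \<le> u"
    and H: "\<And>j::nat. u \<le> pprt (y - real j *\<^sub>R u)"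
  shows "u = 0"
proof -
  have "real j *\<^sub>R u \<le> y" for j
  proof -
    define q where "q = pprt (real j *\<^sub>R u - y)"
    have qq: "pprt (- (y - real j *\<^sub>R u)) = q" by (simp add: q_def)
    have "inf u q \<le> inf (pprt (y - real j *\<^sub>R u)) (pprt (- (y - real j *\<^sub>R u)))"
      unfolding qq using H[of j] by (rule inf_mono) simp
    also have "\<dots> = 0" by (rule pprt_disj)
    finally have i1: "inf u q \<le> 0" .
    have i2: "0 \<le> inf u q" using assms unfolding q_def by simp
    have "inf u q = 0" using i1 i2 by (rule order.antisym)
    then have "inf q u = 0" by (simp add: inf_commute)
    then have z: "inf q (real j *\<^sub>R u) = 0" using assms by (intro disj_scale) (auto simp: q_def scaleR_nonneg_nonneg)
    have ju: "0 \<le> real j *\<^sub>R u" using assms by (simp add: scaleR_nonneg_nonneg)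
    have "q \<le> real j *\<^sub>R u" unfolding q_def
      using pprt_mono[of "real j *\<^sub>R u - y" "real j *\<^sub>R u"] assms ju by simp
    then have "q = 0" using z by (simp add: inf_absorb1)
    then show ?thesis unfolding q_def by (simp add: le_zero_iff_zero_pprt[symmetric])
  qed
  then show ?thesis using arch assms unfolding archimedean_vl_def by blast
qed

lemma clos1:
  fixes a u w v :: "'a::{ordered_real_vector, lattice_ab_group_add}"
  assumes "0 \<le> a" "0 \<le> u" "u \<le> pprt (w - a)" "a \<le> v" "w \<le> v"
  shows "a \<le> pprt (v - u)"
proof -
  define p where "p = pprt (w - a)"
  define q where "q = pprt (a - w)"
  have wa: "w - a = p - q" unfolding p_def q_def
    using prts[of "w - a"] pprt_neg[of "w - a"] by (simp add: algebra_simps)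
  have pq: "inf p q = 0" unfolding p_def q_def using pprt_disj[of "w - a"] by simp
  have "inf u q \<le> inf p q" using assms(3) unfolding p_def[symmetric] by (rule inf_mono) simp
  moreover have "0 \<le> inf u q" using assms by (simp add: q_def)
  ultimately have uq: "inf u q = 0" using pq by simp
  have "a = w - p + q" using wa by (simp add: algebra_simps)
  also have "\<dots> \<le> v - u + q" using assms by (simp add: p_def diff_mono)
  finally have "a \<le> v - u + q" .
  with assms have "a \<le> inf (v + (q - u)) (v + 0)" by (simp add: algebra_simps)
  also have "\<dots> = v + inf (q - u) 0" by (simp add: add_inf_distrib_left)
  also have "inf (q - u) 0 = - pprt (u - q)" unfolding pprt_def by (simp add: neg_sup_eq_inf)
  also have "pprt (u - q) = u" using uq by (simp add: pprt_diff_inf)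
  finally have "a \<le> v - u" by simp
  also have "\<dots> \<le> pprt (v - u)" by (simp add: pprt_def)
  finally show ?thesis .
qed

lemma clos2:
  fixes a d v :: "'a::{ordered_real_vector, lattice_ab_group_add}"
  assumes "inf a d = 0" "a \<le> v"
  shows "a \<le> pprt (v - d)"
proof -
  have "a = pprt (a - d)" using assms by (simp add: pprt_diff_inf)
  also have "\<dots> \<le> pprt (v - d)" using assms by (simp add: diff_right_mono)
  finally show ?thesis .
qed


lemma lemB:
  fixes w d y0 :: "'a::{ordered_real_vector, lattice_ab_group_add}"
  assumes arch: "archimedean_vl TYPE('a)" and y0: "0 \<le> y0" and w: "0 \<le> w" and d: "0 \<le> d"
    and Py: "P y0" and Pw: "\<And>v. P v \<Longrightarrow> w \<le> v"
    and Pc: "\<And>v. P v \<Longrightarrow> P (pprt (v - d))"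
  shows "inf w d = 0"
proof -
  have Pj: "P (pprt (y0 - real j *\<^sub>R d))" for j
  proof (induction j)
    case 0
    then show ?case using Py y0 by simp
  next
    case (Suc j)
    have "pprt (pprt (y0 - real j *\<^sub>R d) - d) = pprt (y0 - real j *\<^sub>R d - d)"
      using d by (rule pprt_pprt_diff)
    also have "y0 - real j *\<^sub>R d - d = y0 - real (Suc j) *\<^sub>R d"
      by (simp add: algebra_simps)
    finally show ?case using Pc[OF Suc] by simp
  qed
  define u where "u = inf w d"
  have u0: "0 \<le> u" using w d by (simp add: u_def)
  have "u \<le> pprt (y0 - real j *\<^sub>R u)" for j
  proof -
    have "u \<le> w" by (simp add: u_def)
    also have "w \<le> pprt (y0 - real j *\<^sub>R d)" using Pw[OF Pj] .
    also have "real j *\<^sub>R u \<le> real j *\<^sub>R d" by (simp add: u_def scaleR_left_mono)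
    then have "pprt (y0 - real j *\<^sub>R d) \<le> pprt (y0 - real j *\<^sub>R u)"
      by (intro pprt_mono diff_left_mono)
    finally show ?thesis .
  qed
  then have "u = 0" using archA[OF arch y0 u0] by blast
  then show ?thesis by (simp add: u_def)
qed

lemma sum_normal:
  fixes U :: "nat \<Rightarrow> 'a::{ordered_real_vector, lattice_ab_group_add} set"
  assumes U0: "\<And>j. 0 \<in> U j" and Un: "\<And>j a b. a \<in> U (Suc j) \<Longrightarrow> b \<in> U (Suc j) \<Longrightarrow> a + b \<in> U j"
    and c: "\<And>k. c k \<in> U k"
  shows "sum c {Suc n..<m} \<in> U n"
proof -
  have "sum c {Suc n..<Suc n + L} \<in> U n" for L
  proof (induction L arbitrary: n)
    case 0
    then show ?case using U0 by simp
  next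
    case (Suc L)
    have "{Suc n..<Suc n + Suc L} = insert (Suc n) {Suc (Suc n)..<Suc (Suc n) + L}" by auto
    then have "sum c {Suc n..<Suc n + Suc L} = c (Suc n) + sum c {Suc (Suc n)..<Suc (Suc n) + L}" by simp
    then show ?case using Un[OF c Suc.IH] by simp
  qed
  from this[of "m - Suc n"] show ?thesis
    by (cases "m \<le> Suc n") (auto simp: U0)
qed


lemma solid_le: "solid S \<Longrightarrow> b \<in> S \<Longrightarrow> 0 \<le> a \<Longrightarrow> a \<le> vabs b \<Longrightarrow> a \<in> S"
  unfolding solid_def by (metis vabs_of_nonneg)

lemma key:
  fixes U :: "nat \<Rightarrow> 'a::{ordered_real_vector, lattice_ab_group_add} set" and d :: "nat \<Rightarrow> 'a"
  assumes arch: "archimedean_vl TYPE('a)"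
    and Us: "\<And>j. solid (U j)" and Uc: "\<And>j. order_closed (U j)" and U0: "\<And>j. 0 \<in> U j"
    and Un: "\<And>j a b. a \<in> U (Suc j) \<Longrightarrow> b \<in> U (Suc j) \<Longrightarrow> a + b \<in> U j"
    and dU: "\<And>k. d k \<in> U k" and dN: "\<And>k. d k \<in> disj_compl (\<Inter>j. U j)"
  shows "order_conv (UNIV::nat set) (\<le>) (\<lambda>k. inf (vabs (d k)) (vabs y)) 0"
proof -
  define a where "a k = inf (vabs (d k)) (vabs y)" for k
  have a0: "0 \<le> a k" for k by (simp add: a_def vabs_nonneg)
  have ad: "a k \<le> vabs (d k)" for k by (simp add: a_def)
  have aU: "a k \<in> U k" for k using solid_le[OF Us dU a0 ad] .
  define F where "F v \<longleftrightarrow> 0 \<le> v \<and> (\<exists>K. \<forall>k\<ge>K. a k \<le> v)" for v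
  have Fy: "F (vabs y)" by (auto simp: F_def a_def vabs_nonneg)
  have Finf: "F (inf v1 v2)" if F1: "F v1" and F2: "F v2" for v1 v2
  proof -
    obtain K1 where "\<forall>k\<ge>K1. a k \<le> v1" "0 \<le> v1" using F1 by (auto simp: F_def)
    moreover obtain K2 where "\<forall>k\<ge>K2. a k \<le> v2" "0 \<le> v2" using F2 by (auto simp: F_def)
    ultimately show ?thesis unfolding F_def by (intro conjI exI[of _ "max K1 K2"]) auto
  qed
  have claim: "w = 0" if w0: "0 \<le> w" and wF: "\<And>v. F v \<Longrightarrow> w \<le> v" for w
  proof -
    have wU: "w \<in> U n" for n
    proof -
      define s where "s m = sum a {Suc n..<m}" for m
      have sU: "s m \<in> U n" for m unfolding s_def by (rule sum_normal[OF U0 Un aU])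
      have s0: "0 \<le> s m" for m unfolding s_def by (intro sum_nonneg a0)
      have smono: "s m \<le> s m'" if "m \<le> m'" for m m'
        unfolding s_def using that a0 by (intro sum_mono2) auto
      have as: "a k \<le> s (Suc k)" if "Suc n \<le> k" for k
        unfolding s_def using that a0 sum_mono2[of "{Suc n..<Suc k}" "{k}" a] by auto
      define t where "t m = pprt (w - s m)" for m
      have t0: "0 \<le> t m" for m by (simp add: t_def)
      have tw: "t m \<le> w" for m
        using pprt_mono[of "w - s m" w] s0[of m] w0 by (simp add: t_def)
      have tmono: "t m' \<le> t m" if "m \<le> m'" for m m'
        unfolding t_def using smono[OF that] by (intro pprt_mono diff_left_mono)
      have tinf: "z \<le> 0" if zl: "\<And>m. z \<le> t m" for z
      proof -
        define u where "u = sup z 0"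
        have ut: "u \<le> t m" for m using zl t0 by (simp add: u_def)
        have u0: "0 \<le> u" by (simp add: u_def)
        have "inf w u = 0"
        proof (rule lemB[OF arch vabs_nonneg w0 u0, where P = F])
          show "F (vabs y)" by (rule Fy)
          show "w \<le> v" if "F v" for v using wF[OF that] .
          show "F (pprt (v - u))" if Fv: "F v" for v
          proof -
            obtain K where K: "\<forall>k\<ge>K. a k \<le> v" and v0: "0 \<le> v" using Fv by (auto simp: F_def)
            have "a k \<le> pprt (v - u)" if "max K (Suc n) \<le> k" for k
            proof (rule clos1[OF a0 u0 _ _ wF[OF Fv]])
              show "a k \<le> v" using K that by auto
              have "u \<le> t (Suc k)" by (rule ut)
              also have "t (Suc k) \<le> pprt (w - a k)"
                unfolding t_def using as[of k] that by (intro pprt_mono diff_left_mono) auto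
              finally show "u \<le> pprt (w - a k)" .
            qed
            then show ?thesis unfolding F_def by (intro conjI exI[of _ "max K (Suc n)"]) auto
          qed
        qed
        moreover have "u \<le> w" using ut[of 0] tw[of 0] by simp
        ultimately have "u = 0" by (simp add: inf_absorb2)
        then show ?thesis unfolding u_def by (metis sup.cobounded1)
      qed
      have dir: "directed_on (range t) (\<lambda>a b. b \<le> a)"
        unfolding directed_on_def
      proof (intro conjI ballI)
        fix p q assume "p \<in> range t" "q \<in> range t"
        then obtain i j where "p = t i" "q = t j" by auto
        then show "\<exists>c\<in>range t. c \<le> p \<and> c \<le> q"
          by (intro bexI[of _ "t (max i j)"]) (auto intro: tmono)
      qed auto
      have "order_conv (range t) (\<lambda>a b. b \<le> a) (\<lambda>v. w - v) w"
        unfolding order_conv_def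
      proof (intro exI conjI)
        show "net_decr_to_zero (range t) (\<lambda>a b. b \<le> a) id"
          unfolding net_decr_to_zero_def is_infimum_def using dir t0 tinf by auto
        show "\<forall>b0\<in>range t. \<exists>a0\<in>range t. \<forall>aa\<in>range t. aa \<le> a0 \<longrightarrow> vabs (w - aa - w) \<le> id b0"
          using t0 by (auto simp: vabs_minus vabs_of_nonneg)
      qed
      moreover have "\<forall>v\<in>range t. w - v \<in> U n"
      proof
        fix v assume "v \<in> range t"
        then obtain m where v: "v = t m" by auto
        have "w - v = inf w (s m)" unfolding v t_def by (rule diff_pprt)
        moreover have "inf w (s m) \<in> U n"
          by (rule solid_le[OF Us sU[of m]]) (auto simp: w0 s0 vabs_of_nonneg le_infI2)
        ultimately show "w - v \<in> U n" by simp
      qed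
      ultimately show ?thesis using Uc[of n] dir unfolding order_closed_def by blast
    qed
    have wd: "inf w (vabs p) = 0" if p: "p \<in> (\<Inter>j. U j)" for p
    proof (rule lemB[OF arch vabs_nonneg w0 vabs_nonneg, where P = F])
      show "F (vabs y)" by (rule Fy)
      show "w \<le> v" if "F v" for v using wF[OF that] .
      show "F (pprt (v - vabs p))" if Fv: "F v" for v
      proof -
        obtain K where K: "\<forall>k\<ge>K. a k \<le> v" using Fv by (auto simp: F_def)
        have "a k \<le> pprt (v - vabs p)" if "K \<le> k" for k
        proof (rule clos2)
          show "a k \<le> v" using K that by auto
          have "inf (a k) (vabs p) \<le> inf (vabs (d k)) (vabs p)" using ad by (rule inf_mono) simp
          also have "\<dots> = 0" using dN[of k] p unfolding disj_compl_def by blast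
          finally show "inf (a k) (vabs p) = 0" using a0[of k] vabs_nonneg[of p]
            by (simp add: order.antisym)
        qed
        then show ?thesis unfolding F_def by auto
      qed
    qed
    have "inf w (vabs w) = 0" using wd wU by blast
    then show ?thesis using w0 by (simp add: vabs_of_nonneg)
  qed
  show ?thesis
    unfolding order_conv_def a_def[symmetric]
  proof (intro exI conjI)
    show "net_decr_to_zero {v. F v} (\<lambda>v v'. v' \<le> v) id"
      unfolding net_decr_to_zero_def directed_on_def is_infimum_def
    proof (intro conjI ballI allI impI)
      show "{v. F v} \<noteq> {}" using Fy by auto
      fix z assume zl: "\<forall>s\<in>id ` {v. F v}. z \<le> s"
      have "sup z 0 = 0"
        by (rule claim) (use zl in \<open>auto simp: F_def\<close>)
      then show "z \<le> 0" by (metis sup.cobounded1)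
    next
      fix p q assume "p \<in> {v. F v}" "q \<in> {v. F v}"
      then show "\<exists>c\<in>{v. F v}. c \<le> p \<and> c \<le> q" using Finf by (intro bexI[of _ "inf p q"]) auto
    qed (auto simp: F_def)
    show "\<forall>b0\<in>{v. F v}. \<exists>a0\<in>UNIV. \<forall>aa\<in>UNIV. a0 \<le> aa \<longrightarrow> vabs (a aa - 0) \<le> id b0"
      by (auto simp: F_def vabs_of_nonneg a0)
  qed
qed


lemma nhd0_Int: "nhd0 T A \<Longrightarrow> nhd0 T B \<Longrightarrow> nhd0 T (A \<inter> B)"
  unfolding nhd0_def by (meson Int_mono IntI openin_Int)

lemma solid_Int: "solid A \<Longrightarrow> solid B \<Longrightarrow> solid (A \<inter> B)"
  unfolding solid_def by blast

lemma nhd0_UNIV: "linear_topology T \<Longrightarrow> nhd0 T UNIV"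
  unfolding nhd0_def linear_topology_def using openin_topspace[of T] by auto

lemma nhd0_half:
  fixes T :: "'a::{ordered_real_vector, lattice_ab_group_add} topology"
  assumes lt: "linear_topology T" and V: "nhd0 T V"
  shows "\<exists>W. nhd0 T W \<and> (\<forall>a\<in>W. \<forall>b\<in>W. a + b \<in> V)"
proof -
  obtain U where U: "openin T U" "0 \<in> U" "U \<subseteq> V" using V unfolding nhd0_def by blast
  have top: "topspace T = UNIV" and c: "continuous_map (prod_topology T T) T (\<lambda>(x, y). x + y)"
    using lt unfolding linear_topology_def by auto
  have "openin (prod_topology T T) {p \<in> topspace (prod_topology T T). (\<lambda>(x, y). x + y) p \<in> U}"
    by (rule openin_continuous_map_preimage[OF c U(1)])
  then have o: "openin (prod_topology T T) {p. fst p + snd p \<in> U}"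
    using top by (simp add: case_prod_beta)
  have "(0, 0) \<in> {p. fst p + snd p \<in> (U::'a set)}" using U by simp
  then obtain A B where AB: "openin T A" "openin T B" "0 \<in> A" "0 \<in> B" "A \<times> B \<subseteq> {p. fst p + snd p \<in> U}"
    using o unfolding openin_prod_topology_alt by blast
  show ?thesis
  proof (intro exI conjI)
    show "nhd0 T (A \<inter> B)" unfolding nhd0_def using AB by (intro exI[of _ "A \<inter> B"]) auto
    show "\<forall>a\<in>A \<inter> B. \<forall>b\<in>A \<inter> B. a + b \<in> V"
    proof (intro ballI)
      fix a b assume "a \<in> A \<inter> B" "b \<in> A \<inter> B"
      then have "(a, b) \<in> A \<times> B" by simp
      then have "(a, b) \<in> {p. fst p + snd p \<in> U}" by (rule subsetD[OF AB(5)])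
      then show "a + b \<in> V" using U(3) by auto
    qed
  qed
qed

lemma net_tail:
  fixes T :: "'a::{ordered_real_vector, lattice_ab_group_add} topology"
  assumes lt: "linear_topology T" and nt: "net_tends T D le x l" and V: "nhd0 T V"
  shows "\<exists>a0\<in>D. \<forall>a\<in>D. le a0 a \<longrightarrow> x a - l \<in> V"
proof -
  obtain U where U: "openin T U" "0 \<in> U" "U \<subseteq> V" using V unfolding nhd0_def by blast
  have top: "topspace T = UNIV" and c: "continuous_map (prod_topology T T) T (\<lambda>(x, y). x + y)"
    using lt unfolding linear_topology_def by auto
  have c2: "continuous_map T (prod_topology T T) (\<lambda>z. (z, - l))"
    by (intro continuous_map_pairedI) (auto simp: top)
  have "continuous_map T T ((\<lambda>(x, y). x + y) \<circ> (\<lambda>z. (z, - l)))"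
    by (rule continuous_map_compose[OF c2 c])
  then have "continuous_map T T (\<lambda>z. z - l)" by (simp add: o_def)
  from openin_continuous_map_preimage[OF this U(1)] have "openin T {z. z - l \<in> U}" using top by simp
  moreover have "l \<in> {z. z - l \<in> U}" using U by simp
  ultimately have "\<exists>a0\<in>D. \<forall>a\<in>D. le a0 a \<longrightarrow> x a \<in> {z. z - l \<in> U}"
    by (intro nt[unfolded net_tends_def, rule_format] conjI)
  then show ?thesis using U(3) by auto
qed


theorem theorem5p4:
  fixes T :: "'a::{ordered_real_vector, lattice_ab_group_add} topology"
    and D :: "'i set" and le :: "'i \<Rightarrow> 'i \<Rightarrow> bool" and x :: "'i \<Rightarrow> 'a" and l :: 'a
  assumes "archimedean_vl TYPE('a)"
    and "fatou_topology T"
    and "carrier_top T = UNIV"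
    and "directed_on D le"
    and "net_tends T D le x l"
  shows "\<exists>\<alpha>. embedded_seq_idx D le \<alpha> \<and> uo_conv (UNIV :: nat set) (\<le>) (\<lambda>n. x (\<alpha> n)) l"
proof -
  note arch = assms(1) and dir = assms(4) and nt = assms(5)
  have ls: "locally_solid T" and fatou: "\<And>V. nhd0 T V \<Longrightarrow> \<exists>W. nhd0 T W \<and> solid W \<and> order_closed W \<and> W \<subseteq> V"
    using assms(2) unfolding fatou_topology_def by auto
  have lt: "linear_topology T" using ls unfolding locally_solid_def by auto
  have lsW: "\<And>V. nhd0 T V \<Longrightarrow> \<exists>W. nhd0 T W \<and> solid W \<and> W \<subseteq> V"
    using ls unfolding locally_solid_def by auto
  show ?thesis
  proof (cases "\<exists>m\<in>D. \<forall>a\<in>D. le a m")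
    case True
    then obtain m where m: "m \<in> D" "\<forall>a\<in>D. le a m" by blast
    have xm: "x m = l"
    proof (rule ccontr)
      assume ne: "x m \<noteq> l"
      have "Hausdorff_space T" "topspace T = UNIV" using lt unfolding linear_topology_def by auto
      then obtain U V where UV: "openin T U" "openin T V" "l \<in> U" "x m \<in> V" "disjnt U V"
        using ne unfolding Hausdorff_space_def by (metis UNIV_I)
      have "\<exists>a0\<in>D. \<forall>a\<in>D. le a0 a \<longrightarrow> x a \<in> U"
        by (intro nt[unfolded net_tends_def, rule_format] conjI UV)
      then obtain a0 where "a0 \<in> D" "\<forall>a\<in>D. le a0 a \<longrightarrow> x a \<in> U" by blast
      then have "x m \<in> U" using m by blast
      then show False using UV unfolding disjnt_def by blast
    qed
    show ?thesis
    proof (intro exI conjI)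
      show "embedded_seq_idx D le (\<lambda>_. m)"
        unfolding embedded_seq_idx_def using m True by auto
      show "uo_conv UNIV (\<le>) (\<lambda>n. x m) l"
        unfolding uo_conv_def order_conv_def
      proof (intro allI exI conjI)
        show "net_decr_to_zero {0::'a} (\<lambda>_ _. True) id"
          unfolding net_decr_to_zero_def directed_on_def is_infimum_def by auto
        show "\<forall>b0\<in>{0::'a}. \<exists>a0\<in>UNIV. \<forall>a\<in>UNIV. a0 \<le> a \<longrightarrow>
            vabs (inf (vabs (x m - l)) (vabs y) - 0) \<le> id b0" for y
          using xm by (simp add: vabs_of_nonneg vabs_nonneg inf_absorb1)
      qed
    qed
  next
    case False
    have "\<forall>a\<in>D. \<exists>c. c \<in> D \<and> le a c \<and> \<not> le c a"
    proof
      fix a assume a: "a \<in> D"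
      then obtain b where b: "b \<in> D" "\<not> le b a" using False by blast
      obtain c where c: "c \<in> D" "le a c" "le b c" using dir a b unfolding directed_on_def by blast
      have "\<not> le c a" using c b a dir unfolding directed_on_def by blast
      then show "\<exists>c. c \<in> D \<and> le a c \<and> \<not> le c a" using c by blast
    qed
    then obtain nxt where nxt: "\<And>a. a \<in> D \<Longrightarrow> nxt a \<in> D \<and> le a (nxt a) \<and> \<not> le (nxt a) a" by metis
    have "\<forall>a\<in>D. \<forall>b\<in>D. \<exists>c. c \<in> D \<and> le a c \<and> le b c" using dir unfolding directed_on_def by blast
    then obtain ub where ub: "\<And>a b. a \<in> D \<Longrightarrow> b \<in> D \<Longrightarrow> ub a b \<in> D \<and> le a (ub a b) \<and> le b (ub a b)"
      by metis
    have "\<forall>V. \<exists>W. nhd0 T V \<longrightarrow> nhd0 T W \<and> solid W \<and> order_closed W \<and> W \<subseteq> V" using fatou by blast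
    then obtain fat where fat: "\<And>V. nhd0 T V \<Longrightarrow> nhd0 T (fat V) \<and> solid (fat V) \<and> order_closed (fat V) \<and> fat V \<subseteq> V"
      by metis
    have "\<forall>V. \<exists>W. nhd0 T V \<longrightarrow> nhd0 T W \<and> solid W \<and> (\<forall>a\<in>W. \<forall>b\<in>W. a + b \<in> V)"
    proof
      fix V
      show "\<exists>W. nhd0 T V \<longrightarrow> nhd0 T W \<and> solid W \<and> (\<forall>a\<in>W. \<forall>b\<in>W. a + b \<in> V)"
      proof (cases "nhd0 T V")
        case True
        obtain W0 where W0: "nhd0 T W0" "\<forall>a\<in>W0. \<forall>b\<in>W0. a + b \<in> V" using nhd0_half[OF lt True] by blast
        obtain W where W: "nhd0 T W" "solid W" "W \<subseteq> W0" using lsW[OF W0(1)] by blast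
        show ?thesis using W W0 by blast
      qed auto
    qed
    then obtain half where half: "\<And>V. nhd0 T V \<Longrightarrow> nhd0 T (half V) \<and> solid (half V) \<and> (\<forall>a\<in>half V. \<forall>b\<in>half V. a + b \<in> V)"
      by metis
    have "\<forall>z. \<exists>V. normal_solid_seq T V \<and> z \<in> disj_compl (\<Inter>n. V n)"
      using assms(3) unfolding carrier_top_def by blast
    then obtain S where S: "\<And>z. normal_solid_seq T (S z) \<and> z \<in> disj_compl (\<Inter>n. S z n)" by metis
    have "\<forall>V. \<exists>a0. nhd0 T V \<longrightarrow> a0 \<in> D \<and> (\<forall>a\<in>D. le a0 a \<longrightarrow> x a - l \<in> V)"
      using net_tail[OF lt nt] by blast
    then obtain tail where tail: "\<And>V. nhd0 T V \<Longrightarrow> tail V \<in> D \<and> (\<forall>a\<in>D. le (tail V) a \<longrightarrow> x a - l \<in> V)"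
      by metis
    obtain a_init where a_init: "a_init \<in> D" using dir unfolding directed_on_def by blast
    define pick where "pick U a = ub (tail U) (nxt a)" for U a
    have pick: "pick U a \<in> D \<and> le a (pick U a) \<and> \<not> le (pick U a) a \<and> x (pick U a) - l \<in> U"
      if "nhd0 T U" "a \<in> D" for U a
    proof -
      have t: "tail U \<in> D" "\<forall>b\<in>D. le (tail U) b \<longrightarrow> x b - l \<in> U" using tail[OF that(1)] by auto
      have n: "nxt a \<in> D" "le a (nxt a)" "\<not> le (nxt a) a" using nxt[OF that(2)] by auto
      have u: "pick U a \<in> D" "le (tail U) (pick U a)" "le (nxt a) (pick U a)"
        using ub[OF t(1) n(1)] unfolding pick_def by auto
      have tr: "\<And>p q r. p \<in> D \<Longrightarrow> q \<in> D \<Longrightarrow> r \<in> D \<Longrightarrow> le p q \<Longrightarrow> le q r \<Longrightarrow> le p r"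
        using dir unfolding directed_on_def by blast
      have "le a (pick U a)" using tr[OF that(2) n(1) u(1) n(2) u(3)] .
      moreover have "\<not> le (pick U a) a" using tr[OF n(1) u(1) that(2) u(3)] n(3) by blast
      ultimately show ?thesis using u t by blast
    qed
    define step where "step j st = (let U = fst st; a = fst (snd st); R = snd (snd st);
        a' = pick U a; R' = (\<lambda>m. R m \<inter> S (x a' - l) m) in (fat (half U \<inter> R' (Suc j)), a', R'))"
      for j :: nat and st :: "'a set \<times> 'i \<times> (nat \<Rightarrow> 'a set)"
    define st where "st = rec_nat (fat UNIV, a_init, \<lambda>m. UNIV) step"
    define Us where "Us j = fst (st j)" for j
    define As where "As j = fst (snd (st j))" for j
    define Rs where "Rs j = snd (snd (st j))" for j
    define al where "al j = As (Suc j)" for j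
    have st0: "st 0 = (fat UNIV, a_init, \<lambda>m. UNIV)" by (simp add: st_def)
    have stS: "st (Suc j) = step j (st j)" for j by (simp add: st_def)
    have alj: "al j = pick (Us j) (As j)" for j
      by (simp add: al_def As_def Us_def stS step_def Let_def)
    have RsS: "Rs (Suc j) m = Rs j m \<inter> S (x (al j) - l) m" for j m
      by (simp add: alj Rs_def As_def Us_def stS step_def Let_def)
    have UsS: "Us (Suc j) = fat (half (Us j) \<inter> Rs (Suc j) (Suc j))" for j
      by (simp add: RsS) (simp add: alj Rs_def As_def Us_def stS step_def Let_def)
    have Snhd: "nhd0 T (S z m) \<and> solid (S z m)" for z m
      using S[of z] unfolding normal_solid_seq_def by blast
    have inv: "nhd0 T (Us j) \<and> solid (Us j) \<and> order_closed (Us j) \<and> (\<forall>m. nhd0 T (Rs j m) \<and> solid (Rs j m))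
       \<and> As j \<in> D" for j
    proof (induction j)
      case 0
      have "nhd0 T UNIV" by (rule nhd0_UNIV[OF lt])
      then show ?case using fat[of UNIV] a_init nhd0_UNIV[OF lt]
        by (simp add: Us_def Rs_def As_def st0 solid_def)
    next
      case (Suc j)
      then have p: "pick (Us j) (As j) \<in> D" using pick by blast
      have R: "nhd0 T (Rs (Suc j) m) \<and> solid (Rs (Suc j) m)" for m
        unfolding RsS using Suc Snhd by (auto intro: nhd0_Int solid_Int)
      have "nhd0 T (half (Us j) \<inter> Rs (Suc j) (Suc j))"
        using half[of "Us j"] Suc R by (auto intro: nhd0_Int)
      then have "nhd0 T (Us (Suc j)) \<and> solid (Us (Suc j)) \<and> order_closed (Us (Suc j))"
        unfolding UsS using fat by blast
      moreover have "As (Suc j) \<in> D" using p alj al_def by simp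
      ultimately show ?case using R by blast
    qed
    have alD: "al j \<in> D" "le (As j) (al j)" "\<not> le (al j) (As j)" "x (al j) - l \<in> Us j" for j
      using pick[of "Us j" "As j"] inv[of j] alj[of j] by auto
    have emb: "embedded_seq_idx D le al"
      unfolding embedded_seq_idx_def using alD by (auto simp: al_def)
    have U0: "0 \<in> Us j" for j using inv[of j] unfolding nhd0_def by blast
    have UW: "Us (Suc j) \<subseteq> half (Us j) \<inter> Rs (Suc j) (Suc j)" for j
    proof -
      have "nhd0 T (half (Us j))" using half[of "Us j"] inv[of j] by blast
      moreover have "nhd0 T (Rs (Suc j) (Suc j))" using inv[of "Suc j"] by blast
      ultimately have "nhd0 T (half (Us j) \<inter> Rs (Suc j) (Suc j))" by (rule nhd0_Int)
      then show ?thesis unfolding UsS using fat by blast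
    qed
    have Un: "a + b \<in> Us j" if "a \<in> Us (Suc j)" "b \<in> Us (Suc j)" for j a b
    proof -
      have "a \<in> half (Us j)" "b \<in> half (Us j)" using UW[of j] that by auto
      then show ?thesis using half[of "Us j"] inv[of j] by blast
    qed
    have UR: "Us (Suc j) \<subseteq> Rs (Suc j) (Suc j)" for j using UW[of j] by blast
    have RS: "k < j \<Longrightarrow> Rs j m \<subseteq> S (x (al k) - l) m" for j k m
    proof (induction j)
      case 0
      then show ?case by simp
    next
      case (Suc j)
      then show ?case unfolding RsS by (cases "k = j") auto
    qed
    have Sdec: "S z m' \<subseteq> S z m" if "m \<le> m'" for z m m'
    proof -
      have "S z (Suc i) \<subseteq> S z i" for i
      proof
        fix p assume p: "p \<in> S z (Suc i)"
        have "0 \<in> S z (Suc i)" using Snhd[of z "Suc i"] unfolding nhd0_def by blast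
        then have "p + 0 \<in> S z i" using S[of z] p unfolding normal_solid_seq_def by blast
        then show "p \<in> S z i" by simp
      qed
      then have "decseq (S z)" by (intro decseq_SucI)
      then show ?thesis using that by (simp add: decseqD)
    qed
    have dN: "x (al k) - l \<in> disj_compl (\<Inter>j. Us j)" for k
    proof -
      have "(\<Inter>j. Us j) \<subseteq> (\<Inter>m. S (x (al k) - l) m)"
      proof
        fix p assume p: "p \<in> (\<Inter>j. Us j)"
        have "p \<in> S (x (al k) - l) m" for m
        proof -
          have "p \<in> Us (Suc (max m k))" using p by blast
          also have "\<dots> \<subseteq> Rs (Suc (max m k)) (Suc (max m k))" by (rule UR)
          also have "\<dots> \<subseteq> S (x (al k) - l) (Suc (max m k))" by (rule RS) simp
          also have "\<dots> \<subseteq> S (x (al k) - l) m" by (rule Sdec) simp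
          finally show ?thesis .
        qed
        then show "p \<in> (\<Inter>m. S (x (al k) - l) m)" by blast
      qed
      then show ?thesis using S[of "x (al k) - l"] unfolding disj_compl_def by blast
    qed
    have "uo_conv UNIV (\<le>) (\<lambda>n. x (al n)) l"
      unfolding uo_conv_def
    proof
      fix y
      show "order_conv UNIV (\<le>) (\<lambda>k. inf (vabs (x (al k) - l)) (vabs y)) 0"
        by (rule key[OF arch, where U = Us]) (use inv U0 Un alD dN in auto)
    qed
    then show ?thesis using emb by blast
  qed
qed

end
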